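(* Let $G$ be a connected graph with $n$ vertices and maximum degree $\Delta$, and let $L$ be a list-assignment with $|L(v)|\ge\deg(v)+1$ for all $v\in V(G)$. Let $\mathcal{C}(G,L)^f$ denote the set of frozen $L$-colourings of $G$ and $\mathcal{C}(G,L)$ the set of all $L$-colourings of $G$. Unless $G$ is a complete graph, \[\frac{|\mathcal{C}(G,L)^f|}{|\mathcal{C}(G,L)|}\le 2^{-n/\Delta^4}.\]
   Context: An $L$-colouring is a proper colouring $\varphi$ with $\varphi(v)\in L(v)$ for all $v$. A vertex $v$ is frozen under $\varphi$ if every colour of $L(v)\setminus\{\varphi(v)\}$ appears on a neighbour of $v$; an $L$-colouring is frozen if all its vertices are frozen. *)

theory Defs
  imports Complex_Main
begin

definition graph :: "'a set \<Rightarrow> ('a \<Rightarrow> 'a \<Rightarrow> bool) \<Rightarrow> bool" where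
  "graph V E \<longleftrightarrow> finite V \<and> (\<forall>u v. E u v \<longrightarrow> E v u) \<and> (\<forall>v. \<not> E v v)
     \<and> (\<forall>u v. E u v \<longrightarrow> u \<in> V \<and> v \<in> V)"

definition neighbours :: "'a set \<Rightarrow> ('a \<Rightarrow> 'a \<Rightarrow> bool) \<Rightarrow> 'a \<Rightarrow> 'a set" where
  "neighbours V E v = {u \<in> V. E v u}"

definition degree :: "'a set \<Rightarrow> ('a \<Rightarrow> 'a \<Rightarrow> bool) \<Rightarrow> 'a \<Rightarrow> nat" where
  "degree V E v = card (neighbours V E v)"

definition max_degree :: "'a set \<Rightarrow> ('a \<Rightarrow> 'a \<Rightarrow> bool) \<Rightarrow> nat" where
  "max_degree V E = Max (insert 0 (degree V E ` V))"

definition connected_graph :: "'a set \<Rightarrow> ('a \<Rightarrow> 'a \<Rightarrow> bool) \<Rightarrow> bool" where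
  "connected_graph V E \<longleftrightarrow> V \<noteq> {} \<and>
     (\<forall>u\<in>V. \<forall>v\<in>V. (u, v) \<in> {(x, y). x \<in> V \<and> y \<in> V \<and> E x y}\<^sup>*)"

definition complete_graph :: "'a set \<Rightarrow> ('a \<Rightarrow> 'a \<Rightarrow> bool) \<Rightarrow> bool" where
  "complete_graph V E \<longleftrightarrow> (\<forall>u\<in>V. \<forall>v\<in>V. u \<noteq> v \<longrightarrow> E u v)"

text \<open>L-colourings; colourings are taken extensional (undefined outside V)
  so that the set of colourings is finite and counted faithfully.\<close>
definition L_colourings :: "'a set \<Rightarrow> ('a \<Rightarrow> 'a \<Rightarrow> bool) \<Rightarrow> ('a \<Rightarrow> 'c set) \<Rightarrow> ('a \<Rightarrow> 'c) set" where
  "L_colourings V E L = {\<phi>. (\<forall>v\<in>V. \<phi> v \<in> L v) \<and> (\<forall>u\<in>V. \<forall>v\<in>V. E u v \<longrightarrow> \<phi> u \<noteq> \<phi> v)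
      \<and> (\<forall>v. v \<notin> V \<longrightarrow> \<phi> v = undefined)}"

definition frozen_vertex :: "'a set \<Rightarrow> ('a \<Rightarrow> 'a \<Rightarrow> bool) \<Rightarrow> ('a \<Rightarrow> 'c set) \<Rightarrow> ('a \<Rightarrow> 'c) \<Rightarrow> 'a \<Rightarrow> bool" where
  "frozen_vertex V E L \<phi> v \<longleftrightarrow> (\<forall>c \<in> L v - {\<phi> v}. \<exists>u\<in>neighbours V E v. \<phi> u = c)"

definition frozen_L_colourings :: "'a set \<Rightarrow> ('a \<Rightarrow> 'a \<Rightarrow> bool) \<Rightarrow> ('a \<Rightarrow> 'c set) \<Rightarrow> ('a \<Rightarrow> 'c) set" where
  "frozen_L_colourings V E L = {\<phi> \<in> L_colourings V E L. \<forall>v\<in>V. frozen_vertex V E L \<phi> v}"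

end

theory Submission
  imports Defs "HOL-Library.FuncSet"
begin

locale gsetting =
  fixes V :: "'a set" and E :: "'a \<Rightarrow> 'a \<Rightarrow> bool" and L :: "'a \<Rightarrow> 'c set"
  assumes gr: "graph V E"
    and lists: "\<And>v. v \<in> V \<Longrightarrow> finite (L v) \<and> card (L v) \<ge> degree V E v + 1"
begin

abbreviation "N \<equiv> neighbours V E"
abbreviation "C \<equiv> L_colourings V E L"
abbreviation "F \<equiv> frozen_L_colourings V E L"

lemma finV: "finite V" using gr by (simp add: graph_def)
lemma symE: "E x y \<Longrightarrow> E y x" using gr by (simp add: graph_def)
lemma irr: "\<not> E x x" using gr by (simp add: graph_def)
lemma EV: "E x y \<Longrightarrow> x \<in> V \<and> y \<in> V" using gr by (simp add: graph_def)
lemma N_iff: "y \<in> N x \<longleftrightarrow> E x y" using EV by (auto simp: neighbours_def)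
lemma finN: "finite (N x)" using finV by (simp add: neighbours_def)

lemma finC: "finite C"
proof -
  have "C \<subseteq> Pi\<^sub>E V L" by (auto simp: L_colourings_def PiE_def Pi_def extensional_def)
  moreover have "finite (Pi\<^sub>E V L)" using finite_PiE finV lists by blast
  ultimately show ?thesis by (rule finite_subset)
qed

lemma finF: "finite F"
  using finC by (rule finite_subset[rotated]) (auto simp: frozen_L_colourings_def)

lemma frozen_struct:
  assumes "\<phi> \<in> C" "v \<in> V" "frozen_vertex V E L \<phi> v"
  shows "inj_on \<phi> (N v) \<and> L v - {\<phi> v} = \<phi> ` N v"
proof -
  let ?A = "L v - {\<phi> v}" and ?B = "\<phi> ` N v"
  have AB: "?A \<subseteq> ?B" using assms(3) unfolding frozen_vertex_def by (metis image_eqI subsetI)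
  have fB: "finite ?B" using finN by simp
  have fL: "finite (L v)" and cL: "card (L v) \<ge> degree V E v + 1" using lists assms(2) by auto
  have pv: "\<phi> v \<in> L v" using assms(1,2) by (auto simp: L_colourings_def)
  have cA: "card ?A = card (L v) - 1" using fL pv by simp
  have "card ?B \<le> card (N v)" by (rule card_image_le[OF finN])
  moreover have "card ?A \<le> card ?B" using card_mono[OF fB AB] .
  moreover have "card (N v) = degree V E v" by (simp add: degree_def)
  ultimately have e1: "card ?B = card (N v)" and e2: "card ?A = card ?B" using cA cL by linarith+
  have "inj_on \<phi> (N v)" using eq_card_imp_inj_on[OF finN e1] .
  moreover have "?A = ?B" using card_subset_eq[OF fB AB e2] .
  ultimately show ?thesis by blast
qed

lemma F_C: "\<phi> \<in> F \<Longrightarrow> \<phi> \<in> C" by (simp add: frozen_L_colourings_def)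
lemma F_fr: "\<phi> \<in> F \<Longrightarrow> v \<in> V \<Longrightarrow> inj_on \<phi> (N v) \<and> L v - {\<phi> v} = \<phi> ` N v"
  using frozen_struct by (auto simp: frozen_L_colourings_def)
lemma C_prop: "\<phi> \<in> C \<Longrightarrow> E x y \<Longrightarrow> \<phi> x \<noteq> \<phi> y"
  using EV by (auto simp: L_colourings_def)

end

definition far :: "('a \<Rightarrow> 'a \<Rightarrow> bool) \<Rightarrow> 'a \<Rightarrow> 'a \<Rightarrow> bool" where
  "far E s t \<longleftrightarrow> (\<forall>a b. (a = s \<or> E s a) \<longrightarrow> (b = t \<or> E t b) \<longrightarrow> a \<noteq> b \<and> \<not> E a b)"

locale gadgets = gsetting +
  fixes S :: "'a set" and u w :: "'a \<Rightarrow> 'a"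
  assumes SV: "S \<subseteq> V"
    and gad: "\<And>s. s \<in> S \<Longrightarrow> E s (u s) \<and> E s (w s) \<and> u s \<noteq> w s \<and> \<not> E (u s) (w s)"
    and farS: "\<And>s t. s \<in> S \<Longrightarrow> t \<in> S \<Longrightarrow> s \<noteq> t \<Longrightarrow> far E s t"
begin

lemma farD: "s \<in> S \<Longrightarrow> t \<in> S \<Longrightarrow> s \<noteq> t \<Longrightarrow> (a = s \<or> E s a) \<Longrightarrow> (b = t \<or> E t b) \<Longrightarrow> a \<noteq> b \<and> \<not> E a b"
  using farS unfolding far_def by blast

lemma u_inj: "inj_on u S"
proof (rule inj_onI)
  fix s t assume "s \<in> S" "t \<in> S" "u s = u t"
  then show "s = t" using farD[of s t "u s" "u t"] gad by blast
qed

lemma u_notS: "t \<in> S \<Longrightarrow> t' \<in> S \<Longrightarrow> u t \<noteq> t'"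
  using farD[of t t' "u t" t'] gad irr by (metis)

definition sigma :: "'a set \<Rightarrow> 'a \<Rightarrow> 'a" where
  "sigma T x = (if x \<in> T then u x else if x \<in> u ` T then the_inv_into T u x else x)"

lemma sigma_t: "T \<subseteq> S \<Longrightarrow> t \<in> T \<Longrightarrow> sigma T t = u t"
  by (simp add: sigma_def)

lemma sigma_ut: "T \<subseteq> S \<Longrightarrow> t \<in> T \<Longrightarrow> sigma T (u t) = t"
proof -
  assume T: "T \<subseteq> S" "t \<in> T"
  have "u t \<notin> T" using T u_notS by blast
  moreover have "inj_on u T" using u_inj T inj_on_subset by blast
  ultimately show ?thesis using T by (simp add: sigma_def the_inv_into_f_f)
qed

lemma sigma_other: "x \<notin> T \<Longrightarrow> x \<notin> u ` T \<Longrightarrow> sigma T x = x"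
  by (simp add: sigma_def)

lemma sigma_sigma: "T \<subseteq> S \<Longrightarrow> sigma T (sigma T x) = x"
  by (metis imageE sigma_other sigma_t sigma_ut)

lemma sigma_outV: "T \<subseteq> S \<Longrightarrow> x \<notin> V \<Longrightarrow> sigma T x = x"
  using SV gad EV by (intro sigma_other) blast+

end

context gadgets
begin

lemma supp_cases:
  obtains (inT) t where "t \<in> T" "x = t" | (inU) t where "t \<in> T" "x = u t" | (none) "sigma T x = x"
  using sigma_other by blast

lemma H:
  assumes T: "T \<subseteq> S" and phi: "\<phi> \<in> F" and xy: "E x y"
    and xs: "x \<in> T \<or> x \<in> u ` T"
  shows "\<phi> (sigma T x) \<noteq> \<phi> (sigma T y)"
  using xs
proof
  assume xT: "x \<in> T"
  have xS: "x \<in> S" using xT T by blast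
  have xV: "x \<in> V" using xS SV by blast
  have fr: "inj_on \<phi> (N x)" using F_fr[OF phi xV] by blast
  show ?thesis
  proof (cases "y = u x")
    case True
    have "\<phi> x \<noteq> \<phi> (u x)" using C_prop[OF F_C[OF phi]] gad[OF xS] by blast
    then show ?thesis using True sigma_t[OF T xT] sigma_ut[OF T xT] by simp
  next
    case False
    have "sigma T y = y"
    proof (cases rule: supp_cases[where T=T and x=y])
      case (inT t)
      then have "t \<noteq> x" using xy irr by blast
      moreover have "t \<in> S" using inT T by blast
      ultimately show ?thesis using farD[of x t x y] inT xS xy by auto
    next
      case (inU t)
      then have "t \<noteq> x" using False by blast
      moreover have "t \<in> S" using inU T by blast
      ultimately show ?thesis using farD[of x t x y] inU xS xy gad[of t] by auto
    qed
    then show ?thesis using sigma_t[OF T xT] fr False xy gad[OF xS] N_iff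
      by (metis inj_on_contraD)
  qed
next
  assume "x \<in> u ` T"
  then obtain t where tT: "t \<in> T" and xt: "x = u t" by blast
  have tS: "t \<in> S" using tT T by blast
  have xV: "x \<in> V" using gad[OF tS] EV xt by blast
  have fr: "inj_on \<phi> (N x)" using F_fr[OF phi xV] by blast
  show ?thesis
  proof (cases "y = t")
    case True
    have "\<phi> t \<noteq> \<phi> (u t)" using C_prop[OF F_C[OF phi]] gad[OF tS] by blast
    then show ?thesis using True xt sigma_t[OF T tT] sigma_ut[OF T tT] by simp
  next
    case False
    have "sigma T y = y"
    proof (cases rule: supp_cases[where T=T and x=y])
      case (inT t')
      then have "t' \<noteq> t" using False by blast
      then show ?thesis using farD[of t t' x y] inT T tS xy xt gad[OF tS] by auto
    next
      case (inU t')
      then have "t' \<noteq> t"  using xy irr xt by blast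
      then show ?thesis using farD[of t t' x y] inU(1,2) T tS xy xt gad[OF tS] gad[of t'] by auto
    qed
    moreover have "t \<in> N x" using gad[OF tS] xt symE N_iff by blast
    moreover have "y \<in> N x" using xy N_iff by blast
    ultimately show ?thesis using sigma_ut[OF T tT] fr False xt
      by (metis inj_on_contraD)
  qed
qed

lemma swap_C:
  assumes T: "T \<subseteq> S" and phi: "\<phi> \<in> F"
  shows "\<phi> \<circ> sigma T \<in> C"
proof -
  have phiC: "\<phi> \<in> C" using F_C[OF phi] .
  have mem: "\<phi> (sigma T x) \<in> L x" if xV: "x \<in> V" for x
  proof (cases rule: supp_cases[where T=T and x=x])
    case (inT t)
    have tV: "t \<in> V" using inT T SV by blast
    have "u t \<in> N t" using gad[of t] inT T N_iff by blast
    then have "\<phi> (u t) \<in> L t" using F_fr[OF phi tV] by blast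
    then show ?thesis using inT sigma_t[OF T] by simp
  next
    case (inU t)
    have tS: "t \<in> S" using inU T by blast
    have uV: "u t \<in> V" using gad[OF tS] EV by blast
    have "t \<in> N (u t)" using gad[OF tS] symE N_iff by blast
    then have "\<phi> t \<in> L (u t)" using F_fr[OF phi uV] by blast
    then show ?thesis using inU sigma_ut[OF T] by simp
  next
    case none
    then show ?thesis using phiC xV by (simp add: L_colourings_def)
  qed
  have pr: "\<phi> (sigma T x) \<noteq> \<phi> (sigma T y)" if "E x y" for x y
  proof (cases "x \<in> T \<or> x \<in> u ` T")
    case True
    then show ?thesis using H[OF T phi that] by blast
  next
    case False
    note xf = this
    show ?thesis
    proof (cases "y \<in> T \<or> y \<in> u ` T")
      case True
      then have "\<phi> (sigma T y) \<noteq> \<phi> (sigma T x)" using H[OF T phi symE[OF that]] by blast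
      then show ?thesis by (rule not_sym)
    next
      case False
      then have "sigma T y = y" "sigma T x = x" using xf sigma_other by auto
      then show ?thesis using C_prop[OF phiC that] by simp
    qed
  qed
  have "\<phi> (sigma T x) = undefined" if "x \<notin> V" for x
    using sigma_outV[OF T that] phiC that by (simp add: L_colourings_def)
  then show ?thesis using mem pr unfolding L_colourings_def comp_def by blast
qed

lemma w_notsupp:
  assumes T: "T \<subseteq> S" and s: "s \<in> S"
  shows "sigma T (w s) = w s"
proof (rule supp_cases[where T=T and x="w s"])
  fix t assume inT: "t \<in> T" "w s = t"
  show ?thesis
  proof (cases "t = s")
    case True then show ?thesis using inT gad[OF s] irr by metis
  next
    case False then show ?thesis using farD[of s t "w s" "w s"] inT T s gad[OF s] by auto
  qed
next
  fix t assume inU: "t \<in> T" "w s = u t"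
  show ?thesis
  proof (cases "t = s")
    case True then show ?thesis using inU gad[OF s] by metis
  next
    case False then show ?thesis using farD[of s t "w s" "w s"] inU T s gad[OF s] gad[of t] by auto
  qed
qed auto

lemma nbr_notsupp:
  assumes T: "T \<subseteq> S" and s: "s \<in> S" and y: "E (w s) y" and ys: "y \<noteq> s"
  shows "sigma T y = y"
proof (cases rule: supp_cases[where T=T and x=y])
  case (inT t)
  then have "t \<noteq> s" using ys by blast
  then show ?thesis using farD[of s t "w s" y] inT T s gad[OF s] y by auto
next
  case (inU t)
  show ?thesis
  proof (cases "t = s")
    case True then have "E (w s) (u s)" using inU y by simp
    then show ?thesis using gad[OF s] symE by blast
  next
    case False then show ?thesis using farD[of s t "w s" y] inU T s gad[OF s] gad[of t] y by auto
  qed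
qed

lemma W_not:
  assumes T: "T \<subseteq> S" and phi: "\<phi> \<in> F" and sT: "s \<in> T"
  shows "\<not> frozen_vertex V E L (\<phi> \<circ> sigma T) (w s)"
proof
  assume fz: "frozen_vertex V E L (\<phi> \<circ> sigma T) (w s)"
  have s: "s \<in> S" using sT T by blast
  have wV: "w s \<in> V" using gad[OF s] EV by blast
  have fr: "inj_on \<phi> (N (w s))" "L (w s) - {\<phi> (w s)} = \<phi> ` N (w s)" using F_fr[OF phi wV] by blast+
  have sN: "s \<in> N (w s)" using gad[OF s] symE N_iff by blast
  have c: "\<phi> s \<in> L (w s) - {(\<phi> \<circ> sigma T) (w s)}"
    using fr(2) sN w_notsupp[OF T s] by auto
  then obtain y where yN: "y \<in> N (w s)" and ye: "\<phi> (sigma T y) = \<phi> s"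
    using fz unfolding frozen_vertex_def by auto
  show False
  proof (cases "y = s")
    case True
    then have "\<phi> (u s) = \<phi> s" using ye sigma_t[OF T sT] by simp
    then show False using C_prop[OF F_C[OF phi]] gad[OF s] by metis
  next
    case False
    then have "sigma T y = y" using nbr_notsupp[OF T s] yN N_iff by blast
    then show False using ye fr(1) yN sN False by (metis inj_on_contraD)
  qed
qed

lemma W_yes:
  assumes T: "T \<subseteq> S" and phi: "\<phi> \<in> F" and s: "s \<in> S" and sT: "s \<notin> T"
  shows "frozen_vertex V E L (\<phi> \<circ> sigma T) (w s)"
proof -
  have wV: "w s \<in> V" using gad[OF s] EV by blast
  have eq: "sigma T y = y" if "y \<in> N (w s)" for y
  proof (cases "y = s")
    case True
    have "y \<notin> u ` T" using u_notS[OF _ s] T True by blast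
    then show ?thesis using sT True sigma_other[of y T] by blast
  next
    case False
    then show ?thesis using nbr_notsupp[OF T s] that N_iff by blast
  qed
  have "frozen_vertex V E L \<phi> (w s)" using phi wV by (simp add: frozen_L_colourings_def)
  then show ?thesis using eq w_notsupp[OF T s] unfolding frozen_vertex_def by auto
qed

lemma count: "card F * 2 ^ card S \<le> card C"
proof -
  let ?f = "\<lambda>(\<phi>, T). \<phi> \<circ> sigma T"
  have inj: "inj_on ?f (F \<times> Pow S)"
  proof (rule inj_onI, clarsimp)
    fix \<phi> T \<phi>' T'
    assume phi: "\<phi> \<in> F" and T: "T \<subseteq> S" and phi': "\<phi>' \<in> F" and T': "T' \<subseteq> S"
      and eq: "\<phi> \<circ> sigma T = \<phi>' \<circ> sigma T'"
    have TT: "T = T'"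
    proof (rule ccontr)
      assume "T \<noteq> T'"
      then obtain s where "s \<in> T \<and> s \<notin> T' \<or> s \<in> T' \<and> s \<notin> T" by blast
      then show False
      proof
        assume a: "s \<in> T \<and> s \<notin> T'"
        then show False using W_not[OF T phi] W_yes[OF T' phi'] eq T by auto
      next
        assume a: "s \<in> T' \<and> s \<notin> T"
        then show False using W_not[OF T' phi'] W_yes[OF T phi] eq T' by auto
      qed
    qed
    have "\<phi> = \<phi>'"
    proof
      fix x
      have "\<phi> (sigma T (sigma T x)) = \<phi>' (sigma T' (sigma T x))" using eq TT by (metis comp_apply)
      then show "\<phi> x = \<phi>' x" using sigma_sigma[OF T] TT by simp
    qed
    then show "\<phi> = \<phi>' \<and> T = T'" using TT by blast
  qed
  have img: "?f ` (F \<times> Pow S) \<subseteq> C" using swap_C by auto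
  have "card (F \<times> Pow S) \<le> card C" using card_inj_on_le[OF inj img finC] .
  moreover have "finite S" using SV finV finite_subset by blast
  ultimately show ?thesis by (simp add: card_cartesian_product card_Pow)
qed

end

primrec ball :: "('a \<Rightarrow> 'a \<Rightarrow> bool) \<Rightarrow> 'a \<Rightarrow> nat \<Rightarrow> 'a set" where
  "ball E s 0 = {s}"
| "ball E s (Suc r) = ball E s r \<union> {y. \<exists>z\<in>ball E s r. E z y}"

lemma ball_step: "y \<in> ball E s r \<Longrightarrow> z = y \<or> E y z \<Longrightarrow> z \<in> ball E s (Suc r)"
  by auto

lemma ball_mono_Suc: "ball E s r \<subseteq> ball E s (Suc r)" by auto

lemma self_in_ball: "s \<in> ball E s r"
  by (induction r) auto

lemma ball_Suc_iff: "y \<in> ball E s (Suc r) \<longleftrightarrow> y \<in> ball E s r \<or> (\<exists>z\<in>ball E s r. E z y)"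
  by simp

context gsetting
begin

definition "Delta = max_degree V E"

lemma deg_le: "v \<in> V \<Longrightarrow> card (N v) \<le> Delta"
proof -
  assume v: "v \<in> V"
  have "finite (insert 0 (degree V E ` V))" using finV by simp
  then have "degree V E v \<le> Max (insert 0 (degree V E ` V))" using v by (intro Max_ge) auto
  then show ?thesis by (simp add: Delta_def max_degree_def degree_def)
qed

lemma ball_sub: "ball E s r \<subseteq> insert s V"
  by (induction r) (auto dest: EV)

lemma fin_ball: "finite (ball E s r)"
  using finite_subset[OF ball_sub] finV by blast

lemma card_ball_Suc: "card (ball E s (Suc r)) = card (ball E s r) + card (ball E s (Suc r) - ball E s r)"
  using card_Diff_subset[OF fin_ball ball_mono_Suc, of s r] card_mono[OF fin_ball ball_mono_Suc, of s r] by linarith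

lemma D0: "s \<in> V \<Longrightarrow> card (ball E s (Suc 0) - ball E s 0) \<le> Delta"
proof -
  assume s: "s \<in> V"
  have "ball E s (Suc 0) - ball E s 0 \<subseteq> N s" using N_iff by auto
  then have "card (ball E s (Suc 0) - ball E s 0) \<le> card (N s)" using card_mono finN by blast
  then show ?thesis using deg_le[OF s] by linarith
qed

lemma DSuc: "card (ball E s (Suc (Suc r)) - ball E s (Suc r)) \<le> (Delta - 1) * card (ball E s (Suc r) - ball E s r)"
proof -
  let ?D = "ball E s (Suc r) - ball E s r"
  let ?D' = "ball E s (Suc (Suc r)) - ball E s (Suc r)"
  have sub: "?D' \<subseteq> (\<Union>z\<in>?D. N z - ball E s (Suc r))"
  proof
    fix x assume x: "x \<in> ?D'"
    then have xn: "x \<notin> ball E s (Suc r)" by blast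
    have "x \<in> ball E s (Suc (Suc r))" using x by blast
    then obtain z where z: "z \<in> ball E s (Suc r)" "E z x" using xn unfolding ball_Suc_iff[of x E s "Suc r"] by blast
    have "z \<notin> ball E s r" using ball_step[of z E s r x] xn z by blast
    then have "z \<in> ?D" using z by blast
    moreover have "x \<in> N z - ball E s (Suc r)" using xn z N_iff by blast
    ultimately show "x \<in> (\<Union>z\<in>?D. N z - ball E s (Suc r))" by blast
  qed
  have each: "card (N z - ball E s (Suc r)) \<le> Delta - 1" if z: "z \<in> ?D" for z
  proof -
    have "z \<in> ball E s (Suc r)" "z \<notin> ball E s r" using z by blast+
    then obtain y where y: "y \<in> ball E s r" "E y z" unfolding ball_Suc_iff[of z E s r] by blast
    have zV: "z \<in> V" using y EV by blast
    have yN: "y \<in> N z" using y symE N_iff by blast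
    have yb: "y \<in> ball E s (Suc r)" using y(1) ball_mono_Suc[of E s r] by blast
    have "N z - ball E s (Suc r) \<subseteq> N z - {y}" using yb by blast
    then have "card (N z - ball E s (Suc r)) \<le> card (N z - {y})" by (intro card_mono) (simp_all add: finN)
    also have "\<dots> = card (N z) - 1" using yN finN by simp
    finally show ?thesis using deg_le[OF zV] by linarith
  qed
  have "card ?D' \<le> card (\<Union>z\<in>?D. N z - ball E s (Suc r))"
  proof (rule card_mono[OF _ sub])
    show "finite (\<Union>z\<in>?D. N z - ball E s (Suc r))" by (intro finite_UN_I finite_Diff fin_ball finN)
  qed
  also have "\<dots> \<le> (\<Sum>z\<in>?D. card (N z - ball E s (Suc r)))" by (intro card_UN_le finite_Diff fin_ball)
  also have "\<dots> \<le> (\<Sum>z\<in>?D. Delta - 1)" using each by (intro sum_mono) blast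
  also have "\<dots> = (Delta - 1) * card ?D" by simp
  finally show ?thesis .
qed

lemma Dbound: "s \<in> V \<Longrightarrow> card (ball E s (Suc r) - ball E s r) \<le> Delta * (Delta - 1) ^ r"
proof (induction r)
  case 0 then show ?case using D0 by simp
next
  case (Suc r)
  have "card (ball E s (Suc (Suc r)) - ball E s (Suc r)) \<le> (Delta - 1) * card (ball E s (Suc r) - ball E s r)"
    by (rule DSuc)
  also have "\<dots> \<le> (Delta - 1) * (Delta * (Delta - 1) ^ r)" using Suc by (intro mult_le_mono2)
  finally have "card (ball E s (Suc (Suc r)) - ball E s (Suc r)) \<le> (Delta - 1) * (Delta * (Delta - 1) ^ r)" .
  then show ?case by (simp add: algebra_simps)
qed

lemma poly_ineq:
  fixes d :: nat assumes "d \<ge> 2"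
  shows "1 + d + d * (d - 1) + d * (d - 1)^2 + d * (d - 1)^3 \<le> d ^ 4"
proof -
  obtain e where d: "d = e + 2" using assms by (metis add.commute le_add_diff_inverse)
  show ?thesis unfolding d by (simp add: algebra_simps power2_eq_square power3_eq_cube power4_eq_xxxx)
qed

declare ball.simps(2)[simp del]

abbreviation "three \<equiv> Suc (Suc (Suc 0))"

lemma ball4: "s \<in> V \<Longrightarrow> Delta \<ge> 2 \<Longrightarrow> card (ball E s (Suc three)) \<le> Delta ^ 4"
proof -
  assume s: "s \<in> V" and d: "Delta \<ge> 2"
  have c0: "card (ball E s 0) = 1" by simp
  have p2: "(Delta - 1) ^ Suc (Suc 0) = (Delta - 1)^2" by (simp add: numeral_2_eq_2)
  have p3: "(Delta - 1) ^ three = (Delta - 1)^3" by (simp add: numeral_3_eq_3)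
  have "card (ball E s (Suc three)) = 1 + card (ball E s (Suc 0) - ball E s 0) + card (ball E s (Suc (Suc 0)) - ball E s (Suc 0))
     + card (ball E s three - ball E s (Suc (Suc 0))) + card (ball E s (Suc three) - ball E s three)"
    using card_ball_Suc[of s 0] card_ball_Suc[of s "Suc 0"] card_ball_Suc[of s "Suc (Suc 0)"] card_ball_Suc[of s three] c0
    by linarith
  also have "\<dots> \<le> 1 + Delta + Delta * (Delta - 1) + Delta * (Delta - 1)^2 + Delta * (Delta - 1)^3"
    using Dbound[OF s, of 0] Dbound[OF s, of "Suc 0"] Dbound[OF s, of "Suc (Suc 0)"] Dbound[OF s, of three]
    unfolding p2 p3 power_0 power_Suc0_right mult_1_right by linarith
  also have "\<dots> \<le> Delta ^ 4" using poly_ineq[OF d] .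
  finally show ?thesis .
qed

lemma notfar_ball: "\<not> far E s t \<Longrightarrow> t \<in> ball E s three \<and> s \<in> ball E t three"
proof -
  assume "\<not> far E s t"
  then obtain a b where a: "a = s \<or> E s a" and b: "b = t \<or> E t b" and ab: "a = b \<or> E a b"
    unfolding far_def by blast
  have b': "t = b \<or> E b t" using b symE by blast
  have a': "s = a \<or> E a s" using a symE by blast
  have ba: "a = b \<or> E b a" using ab symE by blast
  have "a \<in> ball E s (Suc 0)" using ball_step[OF self_in_ball[where E=E and s=s and r=0], of a] a by blast
  then have "b \<in> ball E s (Suc (Suc 0))" using ball_step[of a E s "Suc 0" b] ab by blast
  then have 1: "t \<in> ball E s three" using ball_step[of b E s "Suc (Suc 0)" t] b' by blast
  have "b \<in> ball E t (Suc 0)" using ball_step[OF self_in_ball[where E=E and s=t and r=0], of b] b by blast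
  then have "a \<in> ball E t (Suc (Suc 0))" using ball_step[of b E t "Suc 0" a] ba by blast
  then have "s \<in> ball E t three" using ball_step[of a E t "Suc (Suc 0)" s] a' by blast
  with 1 show ?thesis by blast
qed

end

context gsetting
begin

lemma near_M:
  assumes conn: "connected_graph V E" and nc: "\<not> complete_graph V E" and x: "x \<in> V"
  shows "\<exists>m. m \<in> V \<and> (\<exists>a b. E m a \<and> E m b \<and> a \<noteq> b \<and> \<not> E a b) \<and> (m = x \<or> E x m)"
proof (cases "\<exists>a b. E x a \<and> E x b \<and> a \<noteq> b \<and> \<not> E a b")
  case True
  then show ?thesis using x by blast
next
  case False
  then have cl: "\<And>a b. E x a \<Longrightarrow> E x b \<Longrightarrow> a \<noteq> b \<Longrightarrow> E a b" by blast
  define Nx where "Nx = {y. y = x \<or> E x y}"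
  obtain a b where ab: "a \<in> V" "b \<in> V" "a \<noteq> b" "\<not> E a b"
    using nc unfolding complete_graph_def by blast
  have "\<exists>z\<in>V. z \<notin> Nx"
  proof (rule ccontr)
    assume "\<not> (\<exists>z\<in>V. z \<notin> Nx)"
    then have "a \<in> Nx" "b \<in> Nx" using ab by auto
    then show False using ab cl symE unfolding Nx_def by blast
  qed
  then obtain z where z: "z \<in> V" "z \<notin> Nx" by blast
  let ?R = "{(x, y). x \<in> V \<and> y \<in> V \<and> E x y}"
  have xz: "(x, z) \<in> ?R\<^sup>*" using conn x z unfolding connected_graph_def by blast
  have "z' \<in> Nx \<or> (\<exists>y y'. y \<in> Nx \<and> y' \<notin> Nx \<and> E y y')" if "(x, z') \<in> ?R\<^sup>*" for z'
    using that
  proof (induction rule: rtrancl_induct)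
    case base
    then show ?case unfolding Nx_def by blast
  next
    case (step y z)
    then show ?case by blast
  qed
  then obtain y y' where yy: "y \<in> Nx" "y' \<notin> Nx" "E y y'" using xz z by blast
  have yx: "y \<noteq> x" using yy unfolding Nx_def by blast
  then have Exy: "E x y" using yy unfolding Nx_def by blast
  have "y \<in> V" using Exy EV by blast
  moreover have "E y x" "E y y'" "x \<noteq> y'" "\<not> E x y'" using Exy symE yy unfolding Nx_def by blast+
  ultimately show ?thesis using Exy by blast
qed

end

theorem mainTheorem19:
  fixes V :: "'a set" and E :: "'a \<Rightarrow> 'a \<Rightarrow> bool" and L :: "'a \<Rightarrow> 'c set"
  assumes "graph V E"
    and "connected_graph V E"
    and "\<And>v. v \<in> V \<Longrightarrow> finite (L v) \<and> card (L v) \<ge> degree V E v + 1"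
    and "\<not> complete_graph V E"
  shows "real (card (frozen_L_colourings V E L)) / real (card (L_colourings V E L))
           \<le> 2 powr (- real (card V) / real (max_degree V E) ^ 4)"
proof -
  interpret gsetting V E L using assms(1,3) by unfold_locales auto
  define M where "M = {m \<in> V. \<exists>a b. E m a \<and> E m b \<and> a \<noteq> b \<and> \<not> E a b}"
  have nearM: "\<exists>m\<in>M. m = x \<or> E x m" if x: "x \<in> V" for x
  proof -
    obtain m where m: "m \<in> V" "\<exists>a b. E m a \<and> E m b \<and> a \<noteq> b \<and> \<not> E a b" "m = x \<or> E x m"
      using near_M[OF assms(2,4) x] by blast
    then have "m \<in> M" unfolding M_def by blast
    then show ?thesis using m(3) by blast
  qed
  define P where "P = {S. S \<subseteq> M \<and> (\<forall>s\<in>S. \<forall>t\<in>S. s \<noteq> t \<longrightarrow> far E s t)}"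
  have finP: "finite P"
  proof (rule finite_subset)
    show "P \<subseteq> Pow V" unfolding P_def M_def by auto
    show "finite (Pow V)" using finV by simp
  qed
  have "{} \<in> P" unfolding P_def by blast
  then have "P \<noteq> {}" by blast
  then obtain S where SP: "S \<in> P" and Smax0: "\<forall>S'\<in>P. S \<le> S' \<longrightarrow> S = S'"
    using finite_has_maximal[OF finP] by blast
  have Smax: "\<And>S'. S' \<in> P \<Longrightarrow> S \<subseteq> S' \<Longrightarrow> S = S'" using Smax0 by blast
  have SM: "S \<subseteq> M" and Sfar: "\<And>s t. s \<in> S \<Longrightarrow> t \<in> S \<Longrightarrow> s \<noteq> t \<Longrightarrow> far E s t"
    using SP unfolding P_def by blast+
  have SV: "S \<subseteq> V" using SM unfolding M_def by blast
  have finS: "finite S" using SV finV finite_subset by blast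
  have coverM: "\<exists>s\<in>S. m \<in> ball E s three" if m: "m \<in> M" for m
  proof (cases "m \<in> S")
    case True
    then show ?thesis using self_in_ball[where E=E and s=m and r=three] by blast
  next
    case False
    have "insert m S \<notin> P" using Smax[of "insert m S"] False by blast
    then obtain s t where st: "s \<in> insert m S" "t \<in> insert m S" "s \<noteq> t" "\<not> far E s t"
      using SM m unfolding P_def by blast
    then have "(s = m \<and> t \<in> S) \<or> (t = m \<and> s \<in> S)" using Sfar by blast
    then show ?thesis using notfar_ball[OF st(4)] by blast
  qed
  have cover: "V \<subseteq> (\<Union>s\<in>S. ball E s (Suc three))"
  proof
    fix x assume x: "x \<in> V"
    obtain m where m: "m \<in> M" "m = x \<or> E x m" using nearM[OF x] by blast
    obtain s where s: "s \<in> S" "m \<in> ball E s three" using coverM[OF m(1)] by blast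
    have "x = m \<or> E m x" using m(2) symE by blast
    then have "x \<in> ball E s (Suc three)" using ball_step[OF s(2)] by blast
    then show "x \<in> (\<Union>s\<in>S. ball E s (Suc three))" using s(1) by blast
  qed
  have Vne: "V \<noteq> {}" using assms(2) unfolding connected_graph_def by blast
  then obtain x0 where "x0 \<in> V" by blast
  then obtain m0 where m0: "m0 \<in> M" using nearM by blast
  then obtain a b where ab: "E m0 a" "E m0 b" "a \<noteq> b" and m0V: "m0 \<in> V" unfolding M_def by blast
  have "{a, b} \<subseteq> N m0" using ab N_iff by blast
  then have "card {a, b} \<le> card (N m0)" by (intro card_mono finN)
  then have d2: "Delta \<ge> 2" using deg_le[OF m0V] ab(3) by simp
  have "card V \<le> card (\<Union>s\<in>S. ball E s (Suc three))"
    by (rule card_mono[OF _ cover]) (intro finite_UN_I finS fin_ball)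
  also have "\<dots> \<le> (\<Sum>s\<in>S. card (ball E s (Suc three)))" using card_UN_le[OF finS] .
  also have "\<dots> \<le> (\<Sum>s\<in>S. Delta ^ 4)" using ball4 d2 SV by (intro sum_mono) blast
  also have "\<dots> = card S * Delta ^ 4" by simp
  finally have nk: "card V \<le> card S * Delta ^ 4" .
  define u where "u s = (SOME a. \<exists>b. E s a \<and> E s b \<and> a \<noteq> b \<and> \<not> E a b)" for s
  define w where "w s = (SOME b. E s (u s) \<and> E s b \<and> u s \<noteq> b \<and> \<not> E (u s) b)" for s
  have gad: "E s (u s) \<and> E s (w s) \<and> u s \<noteq> w s \<and> \<not> E (u s) (w s)" if "s \<in> S" for s
  proof -
    have "\<exists>a b. E s a \<and> E s b \<and> a \<noteq> b \<and> \<not> E a b" using that SM unfolding M_def by blast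
    then have "\<exists>b. E s (u s) \<and> E s b \<and> u s \<noteq> b \<and> \<not> E (u s) b" unfolding u_def by (rule someI_ex)
    then show ?thesis unfolding w_def by (rule someI_ex)
  qed
  interpret gadgets V E L S u w
    using SV gad Sfar by unfold_locales blast+
  have cnt: "card F * 2 ^ card S \<le> card C" by (rule count)
  have pos: "(0::real) < 2 powr (- real (card V) / real (max_degree V E) ^ 4)" by simp
  show ?thesis
  proof (cases "card C = 0")
    case True
    then show ?thesis using pos by simp
  next
    case False
    have Dp: "real Delta ^ 4 > 0" using d2 by simp
    have Cp: "real (card C) > 0" using False by simp
    have kp: "(2::real) ^ card S > 0" by simp
    have "real (card F * 2 ^ card S) \<le> real (card C)" using cnt by (simp only: of_nat_le_iff)
    then have "real (card F) * 2 ^ card S \<le> real (card C)" by simp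
    then have "real (card F) \<le> real (card C) / 2 ^ card S" using pos_le_divide_eq[OF kp] by blast
    also have "\<dots> = 1 / 2 ^ card S * real (card C)" by simp
    finally have "real (card F) / real (card C) \<le> 1 / 2 ^ card S" using pos_divide_le_eq[OF Cp] by blast
    also have "\<dots> = 2 powr (- real (card S))" by (simp add: powr_minus powr_realpow inverse_eq_divide)
    also have "\<dots> \<le> 2 powr (- real (card V) / real Delta ^ 4)"
    proof (rule powr_mono)
      have "real (card V) \<le> real (card S * Delta ^ 4)" using nk by (simp only: of_nat_le_iff)
      then have "real (card V) \<le> real (card S) * real Delta ^ 4" by simp
      then have "real (card V) / real Delta ^ 4 \<le> real (card S)" using pos_divide_le_eq[OF Dp] by blast
      then show "- real (card S) \<le> - real (card V) / real Delta ^ 4" by simp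
    qed simp
    finally show ?thesis by (simp add: Delta_def)
  qed
qed

end
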